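(* Let $p$ be an odd prime. A metric $p$-group $(A,q)$ is reductive if and only if it is either isotropically generated or anisotropic.
   Context: $k$ is algebraically closed of characteristic $0$. A metric group $(A,q)$ is a finite Abelian group with a non-degenerate quadratic form $q:A\to k^\times$; a metric $p$-group if $A$ is a $p$-group. $x$ is isotropic if $q(x)=1$, a subgroup $H$ is isotropic if $q|_H=1$; $(A,q)$ is isotropically generated if $A$ is generated by isotropic elements; anisotropic if $q(x)\ne1$ for $x\ne0$; reductive if the intersection of its maximal isotropic subgroups is trivial. *)

theory Defs
  imports "HOL-Algebra.Algebra" "HOL-Computational_Algebra.Polynomial"
begin

definition alg_closed :: "'k::field itself \<Rightarrow> bool" where
  "alg_closed _ \<longleftrightarrow> (\<forall>f::'k poly. degree f \<ge> 1 \<longrightarrow> (\<exists>x. poly f x = 0))"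

text \<open>Associated symmetric form b(x,y) = q(x+y)/(q(x)q(y)) (group written multiplicatively).\<close>
definition assoc_bichar :: "('a, 'b) monoid_scheme \<Rightarrow> ('a \<Rightarrow> 'k::field) \<Rightarrow> 'a \<Rightarrow> 'a \<Rightarrow> 'k" where
  "assoc_bichar G q x y = q (x \<otimes>\<^bsub>G\<^esub> y) / (q x * q y)"

definition quadratic_form :: "('a, 'b) monoid_scheme \<Rightarrow> ('a \<Rightarrow> 'k::field) \<Rightarrow> bool" where
  "quadratic_form G q \<longleftrightarrow>
     (\<forall>x\<in>carrier G. q x \<noteq> 0) \<and>
     (\<forall>x\<in>carrier G. q (inv\<^bsub>G\<^esub> x) = q x) \<and>
     (\<forall>x\<in>carrier G. \<forall>y\<in>carrier G. \<forall>z\<in>carrier G.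
        assoc_bichar G q (x \<otimes>\<^bsub>G\<^esub> y) z = assoc_bichar G q x z * assoc_bichar G q y z)"

definition nondegenerate :: "('a, 'b) monoid_scheme \<Rightarrow> ('a \<Rightarrow> 'k::field) \<Rightarrow> bool" where
  "nondegenerate G q \<longleftrightarrow>
     (\<forall>x\<in>carrier G. (\<forall>y\<in>carrier G. assoc_bichar G q x y = 1) \<longrightarrow> x = \<one>\<^bsub>G\<^esub>)"

definition metric_group :: "('a, 'b) monoid_scheme \<Rightarrow> ('a \<Rightarrow> 'k::field) \<Rightarrow> bool" where
  "metric_group G q \<longleftrightarrow> comm_group G \<and> finite (carrier G) \<and> quadratic_form G q \<and> nondegenerate G q"

definition metric_p_group :: "nat \<Rightarrow> ('a, 'b) monoid_scheme \<Rightarrow> ('a \<Rightarrow> 'k::field) \<Rightarrow> bool" where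
  "metric_p_group p G q \<longleftrightarrow> metric_group G q \<and> (\<exists>n. card (carrier G) = p ^ n)"

definition isotropic_subgroup :: "('a, 'b) monoid_scheme \<Rightarrow> ('a \<Rightarrow> 'k::field) \<Rightarrow> 'a set \<Rightarrow> bool" where
  "isotropic_subgroup G q H \<longleftrightarrow> subgroup H G \<and> (\<forall>x\<in>H. q x = 1)"

definition maximal_isotropic :: "('a, 'b) monoid_scheme \<Rightarrow> ('a \<Rightarrow> 'k::field) \<Rightarrow> 'a set \<Rightarrow> bool" where
  "maximal_isotropic G q H \<longleftrightarrow> isotropic_subgroup G q H \<and>
     (\<forall>K. isotropic_subgroup G q K \<and> H \<subseteq> K \<longrightarrow> K = H)"

definition reductive :: "('a, 'b) monoid_scheme \<Rightarrow> ('a \<Rightarrow> 'k::field) \<Rightarrow> bool" where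
  "reductive G q \<longleftrightarrow> \<Inter>{H. maximal_isotropic G q H} = {\<one>\<^bsub>G\<^esub>}"

definition isotropically_generated :: "('a, 'b) monoid_scheme \<Rightarrow> ('a \<Rightarrow> 'k::field) \<Rightarrow> bool" where
  "isotropically_generated G q \<longleftrightarrow> generate G {x\<in>carrier G. q x = 1} = carrier G"

definition anisotropic :: "('a, 'b) monoid_scheme \<Rightarrow> ('a \<Rightarrow> 'k::field) \<Rightarrow> bool" where
  "anisotropic G q \<longleftrightarrow> (\<forall>x\<in>carrier G. x \<noteq> \<one>\<^bsub>G\<^esub> \<longrightarrow> q x \<noteq> 1)"

end

theory Submission
  imports Defs
begin


lemma roots_card_le:
  fixes m :: nat assumes "m \<ge> 1"
  shows "finite {z::'k::field. z ^ m = 1} \<and> card {z::'k::field. z ^ m = 1} \<le> m"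
proof -
  let ?P = "monom (1::'k) m - 1"
  have deg: "degree ?P = m" using assms
    by (subst diff_conv_add_uminus, subst degree_add_eq_left) (auto simp: degree_monom_eq)
  have nz: "?P \<noteq> 0" using deg assms by auto
  have eq: "{z::'k. z ^ m = 1} = {x. poly ?P x = 0}" by (simp add: poly_monom)
  show ?thesis unfolding eq using card_poly_roots_bound[OF nz] poly_roots_finite[OF nz] deg by simp
qed

lemma pow_gcd_one:
  fixes \<beta> :: "'k::field"
  assumes "\<beta> ^ a = 1" "\<beta> ^ b = 1" "a \<noteq> 0"
  shows "\<beta> ^ gcd a b = 1"
proof -
  obtain x y where xy: "a * x = b * y + gcd a b" using bezout_nat[OF assms(3)] by blast
  have "\<beta> ^ (a*x) = 1" using assms(1) by (simp add: power_mult)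
  moreover have "\<beta> ^ (b*y) = 1" using assms(2) by (simp add: power_mult)
  ultimately show ?thesis using xy by (simp add: power_add)
qed

lemma in_cyclic:
  fixes \<beta> \<gamma> :: "'k::field" and p j :: nat
  assumes p: "Factorial_Ring.prime p" and j: "j \<ge> 1"
    and b1: "\<beta> ^ (p ^ j) = 1" and b2: "\<beta> ^ (p ^ (j - 1)) \<noteq> 1"
    and g: "\<gamma> ^ (p ^ j) = 1"
  shows "\<exists>c. \<gamma> = \<beta> ^ c"
proof -
  let ?m = "p ^ j"
  have m1: "?m \<ge> 1" using prime_gt_0_nat[OF p] by simp
  have bnz: "\<beta> \<noteq> 0" using b1 m1 by (metis power_0_left zero_neq_one not_one_le_zero)
  have inj: "inj_on (\<lambda>c. \<beta> ^ c) {..<?m}"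
  proof (rule inj_onI, rule ccontr)
    fix a c assume a: "a \<in> {..<?m}" and c: "c \<in> {..<?m}" and e: "\<beta> ^ a = \<beta> ^ c" and ne: "a \<noteq> c"
    have "\<exists>d. 0 < d \<and> d < ?m \<and> \<beta> ^ d = 1"
    proof (cases "a < c")
      case True
      have "\<beta> ^ c = \<beta> ^ a * \<beta> ^ (c - a)" using True by (metis power_add le_add_diff_inverse less_imp_le)
      then have "\<beta> ^ (c - a) = 1" using e bnz by simp
      then show ?thesis using True c by (intro exI[of _ "c - a"]) auto
    next
      case False
      then have Tr: "c < a" using ne by simp
      have "\<beta> ^ a = \<beta> ^ c * \<beta> ^ (a - c)" using Tr by (metis power_add le_add_diff_inverse less_imp_le)
      then have "\<beta> ^ (a - c) = 1" using e bnz by simp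
      then show ?thesis using Tr a by (intro exI[of _ "a - c"]) auto
    qed
    then obtain d where d: "0 < d" "d < ?m" "\<beta> ^ d = 1" by blast
    have g1: "\<beta> ^ gcd ?m d = 1" using pow_gcd_one[OF b1 d(3)] prime_gt_0_nat[OF p] by simp
    have "gcd ?m d dvd ?m" by simp
    then obtain i where i: "i \<le> j" "gcd ?m d = p ^ i" using divides_primepow_nat[OF p] by blast
    have "i \<noteq> j"
    proof
      assume "i = j"
      then have "?m dvd d" using i gcd_dvd2[of ?m d] by simp
      then show False using d by (simp add: nat_dvd_not_less)
    qed
    then have "i \<le> j - 1" using i by simp
    then have "p ^ i dvd p ^ (j - 1)" by (simp add: le_imp_power_dvd)
    then obtain r where r: "p ^ (j - 1) = p ^ i * r" by blast
    have "\<beta> ^ (p ^ (j - 1)) = (\<beta> ^ (p ^ i)) ^ r" unfolding r by (rule power_mult)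
    then have "\<beta> ^ (p ^ (j - 1)) = 1" using g1 i by simp
    then show False using b2 by simp
  qed
  have sub: "(\<lambda>c. \<beta> ^ c) ` {..<?m} \<subseteq> {z. z ^ ?m = 1}"
  proof
    fix z assume "z \<in> (\<lambda>c. \<beta> ^ c) ` {..<?m}"
    then obtain c where "z = \<beta> ^ c" by blast
    have "(\<beta> ^ c) ^ ?m = (\<beta> ^ ?m) ^ c" by (simp only: power_mult[symmetric] mult.commute)
    then show "z \<in> {z. z ^ ?m = 1}" using b1 \<open>z = \<beta> ^ c\<close> by simp
  qed
  have cardim: "card ((\<lambda>c. \<beta> ^ c) ` {..<?m}) = ?m" using card_image[OF inj] by simp
  have fin: "finite {z::'k. z ^ ?m = 1}" "card {z::'k. z ^ ?m = 1} \<le> ?m" using roots_card_le[OF m1] by auto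
  have "(\<lambda>c. \<beta> ^ c) ` {..<?m} = {z. z ^ ?m = 1}"
    using card_subset_eq[OF fin(1) sub] cardim fin(2) card_mono[OF fin(1) sub] by linarith
  then show ?thesis using g by blast
qed

lemma in_cyclic2:
  fixes \<beta> \<gamma> :: "'k::field" and p j n :: nat
  assumes p: "Factorial_Ring.prime p" and j: "j \<ge> 1"
    and b1: "\<beta> ^ (p ^ n) = 1" and b2: "\<beta> ^ (p ^ (j - 1)) \<noteq> 1"
    and g: "\<gamma> ^ (p ^ j) = 1"
  shows "\<exists>c. \<gamma> = \<beta> ^ c"
proof -
  have ex: "\<exists>i. \<beta> ^ (p ^ i) = 1" using b1 by blast
  define i where "i = (LEAST i. \<beta> ^ (p ^ i) = 1)"
  have i1: "\<beta> ^ (p ^ i) = 1" unfolding i_def by (rule LeastI_ex[OF ex])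
  have imin: "\<And>k. k < i \<Longrightarrow> \<beta> ^ (p ^ k) \<noteq> 1" unfolding i_def using not_less_Least by blast
  have ij: "j \<le> i"
  proof (rule ccontr)
    assume "\<not> j \<le> i"
    then have "i \<le> j - 1" by simp
    then have "p ^ i dvd p ^ (j - 1)" by (simp add: le_imp_power_dvd)
    then obtain r where "p ^ (j - 1) = p ^ i * r" by blast
    then have "\<beta> ^ (p ^ (j - 1)) = 1" using i1 by (metis power_mult power_one)
    then show False using b2 by simp
  qed
  define \<beta>' where "\<beta>' = \<beta> ^ (p ^ (i - j))"
  have pe1: "p ^ (i - j) * p ^ j = p ^ i" using ij by (metis power_add le_add_diff_inverse2)
  have e1: "\<beta>' ^ (p ^ j) = 1" unfolding \<beta>'_def using i1 pe1
    by (metis power_mult)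
  have pe2: "p ^ (i - j) * p ^ (j - 1) = p ^ (i - 1)" using ij j
    by (metis power_add Nat.add_diff_assoc2 le_add_diff_inverse2 add.commute)
  have "i - 1 < i" using ij j by simp
  then have e2: "\<beta>' ^ (p ^ (j - 1)) \<noteq> 1" unfolding \<beta>'_def using imin[of "i - 1"] pe2
    by (metis power_mult)
  obtain c where "\<gamma> = \<beta>' ^ c" using in_cyclic[OF p j e1 e2 g] by blast
  then show ?thesis unfolding \<beta>'_def by (metis power_mult)
qed


locale qfg = comm_group G for G (structure) +
  fixes q :: "'a \<Rightarrow> 'k::field_char_0"
  assumes qf: "quadratic_form G q"
begin

abbreviation bb where "bb \<equiv> assoc_bichar G q"

lemma q_nz: "x \<in> carrier G \<Longrightarrow> q x \<noteq> 0"
  using qf unfolding quadratic_form_def by blast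

lemma q_inv: "x \<in> carrier G \<Longrightarrow> q (inv x) = q x"
  using qf unfolding quadratic_form_def by blast

lemma b_lin: "x \<in> carrier G \<Longrightarrow> y \<in> carrier G \<Longrightarrow> z \<in> carrier G \<Longrightarrow> bb (x \<otimes> y) z = bb x z * bb y z"
  using qf unfolding quadratic_form_def by blast

lemma q_mult: "x \<in> carrier G \<Longrightarrow> y \<in> carrier G \<Longrightarrow> q (x \<otimes> y) = q x * q y * bb x y"
  using q_nz[of x] q_nz[of y] unfolding assoc_bichar_def by (simp add: field_simps)

lemma b_sym: "x \<in> carrier G \<Longrightarrow> y \<in> carrier G \<Longrightarrow> bb x y = bb y x"
  unfolding assoc_bichar_def by (simp add: m_comm mult.commute)

lemma b_nz: "x \<in> carrier G \<Longrightarrow> y \<in> carrier G \<Longrightarrow> bb x y \<noteq> 0"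
  unfolding assoc_bichar_def using q_nz[of x] q_nz[of y] q_nz[of "x \<otimes> y"] by simp

lemma b_one: "z \<in> carrier G \<Longrightarrow> bb \<one> z = 1"
proof -
  assume z: "z \<in> carrier G"
  have "bb (\<one> \<otimes> \<one>) z = bb \<one> z * bb \<one> z" using b_lin[of \<one> \<one> z] z by simp
  then have "bb \<one> z = bb \<one> z * bb \<one> z" by simp
  then show ?thesis using b_nz[of \<one> z] z by simp
qed

lemma q_one: "q \<one> = 1"
proof -
  have "bb \<one> \<one> = 1" using b_one by simp
  then show ?thesis unfolding assoc_bichar_def using q_nz[of \<one>] by (simp add: field_simps)
qed

lemma b_inv: "x \<in> carrier G \<Longrightarrow> z \<in> carrier G \<Longrightarrow> bb (inv x) z * bb x z = 1"
  using b_lin[of "inv x" x z] b_one by simp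

lemma b_self: "x \<in> carrier G \<Longrightarrow> bb x x = q x ^ 2"
proof -
  assume x: "x \<in> carrier G"
  have "bb x (inv x) = 1 / (q x * q x)" unfolding assoc_bichar_def using x q_one q_inv by simp
  moreover have "bb x (inv x) * bb x x = 1" using b_inv[OF x x] b_sym x by simp
  ultimately have A: "q x * (q x * bb x (inv x)) = 1" and B: "bb x x * bb x (inv x) = 1"
    using q_nz[OF x] by (simp_all add: field_simps)
  have "bb x x = bb x x * (q x * (q x * bb x (inv x)))" using A by simp
  also have "\<dots> = (bb x x * bb x (inv x)) * (q x * q x)" by (simp add: ac_simps)
  also have "\<dots> = q x ^ 2" using B by (simp add: power2_eq_square)
  finally show ?thesis .
qed

lemma b_pow: "x \<in> carrier G \<Longrightarrow> z \<in> carrier G \<Longrightarrow> bb (x [^] (n::nat)) z = bb x z ^ n"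
  by (induction n) (simp_all add: b_one b_lin nat_pow_mult[symmetric] mult.commute)

lemma q_pow: "x \<in> carrier G \<Longrightarrow> q (x [^] (n::nat)) = q x ^ (n * n)"
proof (induction n)
  case 0 then show ?case by (simp add: q_one)
next
  case (Suc n)
  have "q (x [^] Suc n) = q (x [^] n \<otimes> x)" by simp
  also have "\<dots> = q x ^ (n*n) * q x * (q x ^ 2) ^ n"
    using Suc q_mult[of "x [^] n" x] b_pow[of x x n] b_self[of x] by simp
  also have "\<dots> = q x ^ (n*n + 1 + 2*n)"
    by (simp only: power_add power_mult power_one_right)
  also have "n*n + 1 + 2*n = Suc n * Suc n" by simp
  finally show ?case .
qed

lemma q_odd: "x \<in> carrier G \<Longrightarrow> x [^] (m::nat) = \<one> \<Longrightarrow> odd m \<Longrightarrow> q x ^ m = 1"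
proof -
  assume x: "x \<in> carrier G" and m: "x [^] m = \<one>" "odd m"
  have "(q x ^ 2) ^ m = 1" using b_pow[OF x x, of m] m b_one x b_self by simp
  then have sq: "(q x ^ m) ^ 2 = 1" by (simp add: power_mult[symmetric] mult.commute)
  have mm: "(q x ^ m) ^ m = 1" using q_pow[OF x, of m] m q_one by (simp add: power_mult)
  from sq have "q x ^ m = 1 \<or> q x ^ m = -1" by (simp add: power2_eq_1_iff)
  then show ?thesis
  proof
    assume "q x ^ m = -1"
    then have "(-1::'k) ^ m = 1" using mm by simp
    then have "(-1::'k) = 1" using m(2) by simp
    then show ?thesis by simp
  qed
qed

lemma perp_gen:
  assumes S: "S \<subseteq> carrier G" and z: "z \<in> carrier G" and perp: "\<forall>s\<in>S. bb z s = 1"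
    and k: "k \<in> generate G S"
  shows "bb z k = 1"
  using k
proof (induction rule: generate.induct)
  case one then show ?case using b_one z b_sym by simp
next
  case (incl h) then show ?case using perp by simp
next
  case (inv h)
  have "bb (inv h) z * bb h z = 1" using b_inv inv S z by auto
  moreover have hc: "h \<in> carrier G" using inv S by auto
  moreover have "bb h z = 1" using perp inv b_sym[OF hc z] by simp
  ultimately show ?case using b_sym[of z "inv h"] z by simp
next
  case (eng h1 h2)
  have c: "h1 \<in> carrier G" "h2 \<in> carrier G" using eng generate_incl[OF S] by auto
  then show ?case using eng b_lin[of h1 h2 z] b_sym z by simp
qed

lemma iso_gen:
  assumes S: "S \<subseteq> carrier G" and iso: "\<forall>s\<in>S. q s = 1" and perp: "\<forall>s\<in>S. \<forall>t\<in>S. bb s t = 1"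
  shows "isotropic_subgroup G q (generate G S)"
proof -
  have gc: "generate G S \<subseteq> carrier G" using generate_incl[OF S] .
  have p1: "\<forall>s\<in>S. \<forall>k\<in>generate G S. bb s k = 1" using perp_gen S perp by blast
  have p2: "\<forall>k\<in>generate G S. \<forall>k'\<in>generate G S. bb k k' = 1"
  proof (intro ballI)
    fix k k' assume k: "k \<in> generate G S" and k': "k' \<in> generate G S"
    have "\<forall>s\<in>S. bb k s = 1" using p1 k b_sym S gc by (metis subsetD)
    then show "bb k k' = 1" using perp_gen[OF S _ _ k'] k gc by blast
  qed
  have "\<forall>k\<in>generate G S. q k = 1"
  proof
    fix k assume "k \<in> generate G S"
    then show "q k = 1"
    proof (induction rule: generate.induct)
      case one then show ?case by (simp add: q_one)
    next
      case (incl h) then show ?case using iso by simp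
    next
      case (inv h) then show ?case using iso q_inv S by auto
    next
      case (eng h1 h2)
      then show ?case using q_mult[of h1 h2] p2 gc by auto
    qed
  qed
  then show ?thesis unfolding isotropic_subgroup_def using generate_is_subgroup[OF S] by blast
qed

lemma iso_pair:
  assumes H: "isotropic_subgroup G q H" and x: "x \<in> H" and y: "y \<in> H"
  shows "bb x y = 1"
proof -
  have sg: "subgroup H G" using H unfolding isotropic_subgroup_def by blast
  have c: "x \<in> carrier G" "y \<in> carrier G" using subgroup.subset[OF sg] x y by auto
  have "x \<otimes> y \<in> H" by (rule subgroup.m_closed[OF sg x y])
  then have "q (x \<otimes> y) = 1" "q x = 1" "q y = 1" using H x y unfolding isotropic_subgroup_def by blast+
  then show ?thesis using q_mult[OF c] by simp
qed

lemma exists_max: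
  assumes fin: "finite (carrier G)" and H: "isotropic_subgroup G q H"
  shows "\<exists>M. maximal_isotropic G q M \<and> H \<subseteq> M"
proof -
  let ?A = "{K. K \<subseteq> carrier G \<and> isotropic_subgroup G q K \<and> H \<subseteq> K}"
  have sub: "?A \<subseteq> Pow (carrier G)" by auto
  have "finite (Pow (carrier G))" using fin by simp
  then have fA: "finite ?A" using finite_subset[OF sub] by simp
  have "subgroup H G" using H unfolding isotropic_subgroup_def by simp
  then have "H \<subseteq> carrier G" by (rule subgroup.subset)
  then have "H \<in> ?A" using H by simp
  then obtain M where M: "M \<in> ?A" "\<forall>K\<in>?A. M \<subseteq> K \<longrightarrow> M = K"
    using finite_has_maximal[OF fA] by blast
  have "maximal_isotropic G q M"
    unfolding maximal_isotropic_def
  proof (intro conjI allI impI)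
    show "isotropic_subgroup G q M" using M by blast
    fix K assume K: "isotropic_subgroup G q K \<and> M \<subseteq> K"
    have "subgroup K G" using K unfolding isotropic_subgroup_def by simp
    then have "K \<subseteq> carrier G" by (rule subgroup.subset)
    then have "K \<in> ?A" using M K by auto
    then show "K = M" using M K by blast
  qed
  then show ?thesis using M by blast
qed

lemma in_max:
  assumes M: "maximal_isotropic G q M" and x: "x \<in> carrier G" and qx: "q x = 1"
    and perp: "\<forall>h\<in>M. bb x h = 1"
  shows "x \<in> M"
proof -
  have Mi: "isotropic_subgroup G q M" using M unfolding maximal_isotropic_def by blast
  have Mc: "M \<subseteq> carrier G" using Mi unfolding isotropic_subgroup_def by (simp add: subgroup.subset)
  let ?S = "insert x M"
  have S: "?S \<subseteq> carrier G" using Mc x by blast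
  have iso: "\<forall>s\<in>?S. q s = 1" using qx Mi unfolding isotropic_subgroup_def by blast
  have perpS: "\<forall>s\<in>?S. \<forall>t\<in>?S. bb s t = 1"
  proof (intro ballI)
    fix s t assume s: "s \<in> ?S" and t: "t \<in> ?S"
    show "bb s t = 1"
    proof (cases "s = x")
      case True
      then show ?thesis
      proof (cases "t = x")
        case True then show ?thesis using \<open>s = x\<close> b_self x qx by simp
      next
        case False then show ?thesis using \<open>s = x\<close> t perp by simp
      qed
    next
      case False
      then have sM: "s \<in> M" using s by simp
      then show ?thesis
      proof (cases "t = x")
        have sc: "s \<in> carrier G" using sM Mc by auto
        case True then show ?thesis using sM perp b_sym[OF sc x] by simp
      next
        case False then show ?thesis using sM t iso_pair[OF Mi] by simp
      qed
    qed
  qed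
  have gi: "isotropic_subgroup G q (generate G ?S)" using iso_gen[OF S iso perpS] .
  have "M \<subseteq> generate G ?S" using generate.incl[of _ ?S G] by blast
  then have "generate G ?S = M" using M gi unfolding maximal_isotropic_def by blast
  then show ?thesis using generate.incl[of x ?S G] by blast
qed

end


context qfg begin
lemma sub_pow: "subgroup H G \<Longrightarrow> y \<in> H \<Longrightarrow> y [^] (c::nat) \<in> H"
  by (induction c) (simp_all add: subgroup.one_closed subgroup.m_closed)

lemma main:
  assumes p: "Factorial_Ring.prime p" and oddp: "odd p"
    and fin: "finite (carrier G)" and cardn: "card (carrier G) = p ^ n"
    and nd: "nondegenerate G q"
  shows "reductive G q \<longleftrightarrow> isotropically_generated G q \<or> anisotropic G q"
proof -
  define Iso where "Iso = {x\<in>carrier G. q x = 1}"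
  define I where "I = generate G Iso"
  have IsoC: "Iso \<subseteq> carrier G" unfolding Iso_def by auto
  have Isg: "subgroup I G" unfolding I_def using generate_is_subgroup[OF IsoC] .
  have IsoI: "Iso \<subseteq> I" unfolding I_def by (rule subsetI, erule generate.incl)
  have oddpn: "odd (p ^ n)" using oddp by simp
  have ordp: "x [^] (p ^ n) = \<one>" if "x \<in> carrier G" for x
    using pow_order_eq_1[OF that] cardn unfolding Coset.order_def by simp
  have bpow1: "bb x y ^ (p ^ n) = 1" if "x \<in> carrier G" "y \<in> carrier G" for x y
    using b_pow[OF that, of "p ^ n"] ordp[OF that(1)] b_one[OF that(2)] by simp
  have exmax: "\<exists>M. maximal_isotropic G q M"
    using exists_max[OF fin iso_gen[of "{}"]] by auto
  have maxC: "\<And>M. maximal_isotropic G q M \<Longrightarrow> M \<subseteq> carrier G"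
    unfolding maximal_isotropic_def isotropic_subgroup_def by (simp add: subgroup.subset)
  have maxIso: "\<And>M. maximal_isotropic G q M \<Longrightarrow> M \<subseteq> Iso"
    unfolding Iso_def using maxC unfolding maximal_isotropic_def isotropic_subgroup_def by blast
  have one_in: "\<one> \<in> \<Inter>{H. maximal_isotropic G q H}"
    unfolding maximal_isotropic_def isotropic_subgroup_def by (simp add: subgroup.one_closed)
  have InterC: "\<Inter>{H. maximal_isotropic G q H} \<subseteq> carrier G" using exmax maxC by blast
  have radical: "\<And>z. reductive G q \<Longrightarrow> z \<in> carrier G \<Longrightarrow> q z = 1 \<Longrightarrow> \<forall>y\<in>Iso. bb z y = 1 \<Longrightarrow> z = \<one>"
  proof -
    fix z assume red: "reductive G q" and z: "z \<in> carrier G" "q z = 1" "\<forall>y\<in>Iso. bb z y = 1"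
    have "z \<in> \<Inter>{H. maximal_isotropic G q H}"
    proof
      fix M assume "M \<in> {H. maximal_isotropic G q H}"
      then have M: "maximal_isotropic G q M" by simp
      show "z \<in> M" using in_max[OF M z(1,2)] maxIso[OF M] z(3) by blast
    qed
    then show "z = \<one>" using red unfolding reductive_def by simp
  qed
  show ?thesis
  proof
    assume red: "reductive G q"
    show "isotropically_generated G q \<or> anisotropic G q"
    proof (cases "anisotropic G q")
      case True then show ?thesis by simp
    next
      case False
      then obtain y0 where y0: "y0 \<in> carrier G" "y0 \<noteq> \<one>" "q y0 = 1"
        unfolding anisotropic_def by blast
      have y0I: "y0 \<in> Iso" using y0 unfolding Iso_def by simp
      have "carrier G \<subseteq> I"
      proof
        fix x assume x: "x \<in> carrier G"
        show "x \<in> I"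
        proof (rule ccontr)
          assume xI: "x \<notin> I"
          have noiso: "\<And>w. w \<in> I \<Longrightarrow> q (x \<otimes> w) = 1 \<Longrightarrow> False"
          proof -
            fix w assume w: "w \<in> I" and qw: "q (x \<otimes> w) = 1"
            have wc: "w \<in> carrier G" using w Isg subgroup.subset by blast
            have "x \<otimes> w \<in> Iso" using qw x wc unfolding Iso_def by simp
            then have "x \<otimes> w \<in> I" using IsoI by blast
            then have "(x \<otimes> w) \<otimes> inv w \<in> I" using w Isg subgroup.m_closed subgroup.m_inv_closed by metis
            moreover have "(x \<otimes> w) \<otimes> inv w = x" using x wc by (simp add: m_assoc)
            ultimately show False using xI by simp
          qed
          have qx1: "q x ^ (p ^ n) = 1" using q_odd[OF x ordp[OF x] oddpn] .
          have qxne: "q x \<noteq> 1"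
          proof
            assume "q x = 1"
            then have "x \<in> Iso" using x unfolding Iso_def by simp
            then show False using xI IsoI by blast
          qed
          define j where "j = (LEAST j. q x ^ (p ^ j) = 1)"
          have j1: "q x ^ (p ^ j) = 1" unfolding j_def by (rule LeastI[where k=n], rule qx1)
          have jmin: "\<And>k. k < j \<Longrightarrow> q x ^ (p ^ k) \<noteq> 1" unfolding j_def using not_less_Least by blast
          have jpos: "j \<ge> 1" using j1 qxne by (cases j) auto
          have jm1: "q x ^ (p ^ (j - 1)) \<noteq> 1" using jmin jpos by simp
          define \<gamma> where "\<gamma> = inverse (q x)"
          have g1: "\<gamma> ^ (p ^ j) = 1" unfolding \<gamma>_def using j1 by (simp add: power_inverse)
          have gq: "q x * \<gamma> = 1" unfolding \<gamma>_def using q_nz[OF x] by simp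
          have C: "\<forall>y\<in>Iso. bb x y ^ (p ^ (j - 1)) = 1"
          proof
            fix y assume yI: "y \<in> Iso"
            have yc: "y \<in> carrier G" using yI IsoC by blast
            show "bb x y ^ (p ^ (j - 1)) = 1"
            proof (rule ccontr)
              assume ne: "bb x y ^ (p ^ (j - 1)) \<noteq> 1"
              obtain c where c: "\<gamma> = bb x y ^ c"
                using in_cyclic2[OF p jpos bpow1[OF x yc] ne g1] by blast
              define w where "w = y [^] c"
              have "y \<in> I" using yI IsoI by blast
              then have wI: "w \<in> I" unfolding w_def by (rule sub_pow[OF Isg])
              have wc: "w \<in> carrier G" unfolding w_def using yc by simp
              have qw: "q w = 1" unfolding w_def using q_pow[OF yc] yI unfolding Iso_def by simp
              have "bb x w = bb w x" using b_sym[OF x wc] .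
              also have "\<dots> = bb y x ^ c" unfolding w_def using b_pow[OF yc x] .
              also have "\<dots> = bb x y ^ c" using b_sym[OF yc x] by simp
              finally have bw: "bb x w = \<gamma>" using c by simp
              have "q (x \<otimes> w) = 1" using q_mult[OF x wc] qw bw gq by simp
              then show False using noiso wI by blast
            qed
          qed
          show False
          proof (cases "j = 1")
            case False
            then have j2: "j \<ge> 2" using jpos by simp
            define x1 where "x1 = x [^] (p ^ (j - 1))"
            have x1c: "x1 \<in> carrier G" unfolding x1_def using x by simp
            have e: "(j - 1) + (j - 1) = j + (j - 2)" using j2 by simp
            have ee: "p ^ (j - 1) * p ^ (j - 1) = p ^ j * p ^ (j - 2)"
              by (simp only: power_add[symmetric] e)
            have "q x1 = q x ^ (p ^ j * p ^ (j - 2))" unfolding x1_def using q_pow[OF x] ee by simp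
            also have "\<dots> = (q x ^ (p ^ j)) ^ (p ^ (j - 2))" by (rule power_mult)
            also have "\<dots> = 1" using j1 by simp
            finally have qx1': "q x1 = 1" .
            have bx1: "\<forall>y\<in>Iso. bb x1 y = 1" unfolding x1_def using C b_pow[OF x] IsoC by auto
            have "x1 = \<one>" using radical[OF red x1c qx1' bx1] .
            then have "q x ^ (p ^ (j - 1)) = 1" using q_odd[OF x] oddp unfolding x1_def by simp
            then show False using jm1 by simp
          next
            case True
            then have C1: "\<forall>y\<in>Iso. bb x y = 1" using C by simp
            obtain y where yI: "y \<in> Iso" and bne: "bb y0 y \<noteq> 1"
              using radical[OF red y0(1) y0(3)] y0(2) by blast
            have yc: "y \<in> carrier G" using yI IsoC by blast
            have bne': "bb y0 y ^ (p ^ (1 - 1)) \<noteq> 1" using bne by simp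
            have g1': "\<gamma> ^ (p ^ 1) = 1" using g1 True by simp
            obtain c where c: "\<gamma> = bb y0 y ^ c"
              using in_cyclic2[OF p _ bpow1[OF y0(1) yc] bne' g1'] by auto
            define w where "w = y0 [^] c \<otimes> y"
            have y0c: "y0 [^] c \<in> carrier G" using y0 by simp
            have "y0 \<in> I" "y \<in> I" using y0I yI IsoI by blast+
            then have wI: "w \<in> I" unfolding w_def using sub_pow[OF Isg] subgroup.m_closed[OF Isg] by blast
            have wc: "w \<in> carrier G" unfolding w_def using yc y0c by simp
            have qy0c: "q (y0 [^] c) = 1" using q_pow[OF y0(1)] y0(3) by simp
            have qw: "q w = \<gamma>" unfolding w_def using q_mult[OF y0c yc] qy0c yI b_pow[OF y0(1) yc] c
              unfolding Iso_def by simp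
            have bxy0: "bb y0 x = 1" using C1 y0I b_sym[OF x y0(1)] by simp
            have bxy: "bb y x = 1" using C1 yI b_sym[OF x yc] by simp
            have bw: "bb x w = 1" using b_sym[OF x wc] unfolding w_def
              using b_lin[OF y0c yc x] b_pow[OF y0(1) x] bxy0 bxy by simp
            have "q (x \<otimes> w) = 1" using q_mult[OF x wc] qw bw gq by simp
            then show False using noiso wI by blast
          qed
        qed
      qed
      then have "generate G Iso = carrier G" using generate_incl[OF IsoC] unfolding I_def by blast
      then show ?thesis unfolding isotropically_generated_def Iso_def by simp
    qed
  next
    assume h: "isotropically_generated G q \<or> anisotropic G q"
    show "reductive G q" unfolding reductive_def
    proof
      show "{\<one>} \<subseteq> \<Inter>{H. maximal_isotropic G q H}" using one_in by simp
    next
      show "\<Inter>{H. maximal_isotropic G q H} \<subseteq> {\<one>}"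
      proof
        fix x assume xin: "x \<in> \<Inter>{H. maximal_isotropic G q H}"
        have x: "x \<in> carrier G" using xin InterC by blast
        show "x \<in> {\<one>}"
        proof (cases "anisotropic G q")
          case True
          obtain M where M: "maximal_isotropic G q M" using exmax by blast
          have "x \<in> M" using xin M by blast
          then have "x \<in> Iso" using maxIso[OF M] by blast
          then show ?thesis using True unfolding anisotropic_def Iso_def by auto
        next
          case False
          then have ig: "generate G Iso = carrier G" using h unfolding isotropically_generated_def Iso_def by simp
          have perp: "\<forall>y\<in>Iso. bb x y = 1"
          proof
            fix y assume yI: "y \<in> Iso"
            have yc: "y \<in> carrier G" and qy: "q y = 1" using yI unfolding Iso_def by auto
            have "isotropic_subgroup G q (generate G {y})"
              using iso_gen[of "{y}"] yc qy b_self[OF yc] by simp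
            then obtain M where M: "maximal_isotropic G q M" "generate G {y} \<subseteq> M"
              using exists_max[OF fin] by blast
            have yM: "y \<in> M" using M(2) generate.incl[of y "{y}" G] by blast
            have xM: "x \<in> M" using xin M(1) by blast
            show "bb x y = 1" using iso_pair[OF _ xM yM] M(1) unfolding maximal_isotropic_def by blast
          qed
          have "\<forall>k\<in>carrier G. bb x k = 1" using perp_gen[OF IsoC x perp] ig by blast
          then show ?thesis using nd x unfolding nondegenerate_def by simp
        qed
      qed
    qed
  qed
qed
end

theorem proposition6p7:
  fixes p :: nat and G :: "('a, 'b) monoid_scheme" and q :: "'a \<Rightarrow> 'k::field_char_0"
  assumes "alg_closed TYPE('k)"
    and "Factorial_Ring.prime p" and "odd p"
    and "metric_p_group p G q"
  shows "reductive G q \<longleftrightarrow> isotropically_generated G q \<or> anisotropic G q"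
proof -
  obtain n where mg: "metric_group G q" and cardn: "card (carrier G) = p ^ n"
    using assms(4) unfolding metric_p_group_def by blast
  have cg: "comm_group G" and fin: "finite (carrier G)" and qf: "quadratic_form G q"
    and nd: "nondegenerate G q" using mg unfolding metric_group_def by auto
  interpret qfg G q using cg qf by (simp add: qfg_def qfg_axioms_def)
  show ?thesis using main[OF assms(2,3) fin cardn nd] .
qed

end
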